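(* Let $P=u_1;\ldots;u_k$ be a PGLD program and let $\langle\sigma,\alpha\rangle$ be the molecular dynamics state reached from $t_{\mathrm{init}}$ by executing $\mathrm{pgldmd}(P)$ (applying $\mathrm{eff}$ for its methods in order); write $t=\langle\sigma,\alpha\rangle$. Then $\mathrm{yld}(\mathsf{equal}(s,s_1),t)=T$ and for all $j,l\in[1,k]$, $f\in\mathrm{Foci}$, $m\in\mathrm{Meth}$: (i) $u_j=f.m$ iff $\mathrm{yld}(\mathsf{getfield}(u,s_j,\mathsf{focus}),t)=T$, $\mathrm{yld}(\mathsf{equal}(u,f),\mathrm{eff}(\mathsf{getfield}(u,s_j,\mathsf{focus}),t))=T$, $\mathrm{yld}(\mathsf{getfield}(v,s_j,\mathsf{method}),t)=T$, $\mathrm{yld}(\mathsf{equal}(v,m),\mathrm{eff}(\mathsf{getfield}(v,s_j,\mathsf{method}),t))=T$, $\mathrm{yld}(\mathsf{getfield}(s,s_j,\mathsf{pos}),t)=T$, $\mathrm{yld}(\mathsf{equal}(s,s_{j+1}),\mathrm{eff}(\mathsf{getfield}(s,s_j,\mathsf{pos}),t))=T$, $\mathrm{yld}(\mathsf{getfield}(s,s_j,\mathsf{neg}),t)=T$, $\mathrm{yld}(\mathsf{equal}(s,s_{j+1}),\mathrm{eff}(\mathsf{getfield}(s,s_j,\mathsf{neg}),t))=T$; (ii) $u_j=+f.m$ iff the same eight conditions hold except that the last one has $s_{j+2}$ in place of $s_{j+1}$; (iii) $u_j=-f.m$ iff the same eight conditions hold except that the sixth one has $s_{j+2}$ in place of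 $s_{j+1}$; (iv) $u_j=\#\#l$ iff $\mathrm{yld}(\mathsf{getfield}(s,s_j,\mathsf{ajmp}),t)=T$ and $\mathrm{yld}(\mathsf{equal}(s,s_l),\mathrm{eff}(\mathsf{getfield}(s,s_j,\mathsf{ajmp}),t))=T$; (v) $u_j=\#\#l'$ for some $l'\notin[1,k]$ iff $\mathrm{yld}(\mathsf{hasfield}(s_j,\mathsf{stop}),t)=T$.
   Context: PGLD. A PGLD program $u_1;\ldots;u_k$ ($k\ge1$) is a sequence of instructions: basic instructions $f.m$, positive tests $+f.m$, negative tests $-f.m$ ($f\in\mathrm{Foci}$, $m\in\mathrm{Meth}$), and absolute jumps $\#\#l$ ($l\in\mathbb N$). Molecular dynamics. Fix a finite set $\mathrm{Spot}$ of spots; finite disjoint sets $\mathrm{Foci}$, $\mathrm{Meth}$ with $\mathrm{Foci},\mathrm{Meth}\subseteq\mathrm{Spot}$; a finite set $\mathrm{Field}$ containing distinct fields $\mathsf{stop},\mathsf{ajmp},\mathsf{focus},\mathsf{method},\mathsf{pos},\mathsf{neg}$; an infinite countable set $\mathrm{PAtom}$ of proto-atoms, $\bot\notin\mathrm{PAtom}$, with a bijection $\mathrm{proatom}:\mathbb N_{\ge1}\to\mathrm{PAtom}$. A state is a pair $\langle\sigma,\alpha\rangle$ with $\sigma:\mathrm{Spot}\to\mathrm{PAtom}\cup\{\bot\}$, $\alpha$ a map from a finite set $\mathrm{dom}(\alpha)\subseteq\mathrm{PAtom}$ (the atoms) assigning to each atom $a$ a map $\alpha(a)$ from a finite set of fields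 to $\mathrm{PAtom}\cup\{\bot\}$, all values of $\sigma$ and each $\alpha(a)$ lying in $\mathrm{dom}(\alpha)\cup\{\bot\}$. $t_{\mathrm{init}}$ is the state with $\mathrm{dom}(\alpha)=\emptyset$. For a method $m$ and state $t$, $\mathrm{eff}(m,t)$ is the new state and $\mathrm{yld}(m,t)\in\{T,F\}$ the reply; unless stated the state is unchanged ("$v$ is a field of $s$" means $\sigma(s)\ne\bot$ and $v\in\mathrm{dom}(\alpha(\sigma(s)))$): $\mathsf{create}(s)$: with $a=\mathrm{proatom}(n+1)$, $n=\max\{n':\mathrm{proatom}(n')\in\mathrm{dom}(\alpha)\}$ ($\max\emptyset=0$), set $\sigma(s):=a$ and add atom $a$ with no fields; $T$. $\mathsf{setspot}(s,s')$: $\sigma(s):=\sigma(s')$; $T$. $\mathsf{equal}(s,s')$: $T$ iff $\sigma(s)=\sigma(s')$, else $F$. $\mathsf{addfield}(s,v)$: if $\sigma(s)\ne\bot$ and $v$ is not a field of $s$, add field $v$ with content $\bot$ to atom $\sigma(s)$, $T$; else $F$. $\mathsf{hasfield}(s,v)$: $T$ iff $v$ is a field of $s$, else $F$. $\mathsf{setfield}(s,v,s')$: if $v$ is a field of $s$, set $\alpha(\sigma(s))(v):=\sigma(s')$, $T$; else $F$. $\mathsf{getfield}(s,s',v)$: if $v$ is a field of $s'$, set $\sigma(s):=\alpha(\sigma(s'))(v)$, $T$; else $F$. Representation. Fix pairwise distinct spots $s,u,v,s_1,\ldots,s_{k+2}\in\mathrm{Spot}\setminus(\mathrm{Foci}\cup\mathrm{Meth})$.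 For $P=u_1;\ldots;u_k$ with distinct occurring foci $f_1,\ldots,f_n$ and distinct occurring methods $m_1,\ldots,m_{n'}$, $\mathrm{pgldmd}(P)$ is the sequence of methods $\mathsf{create}(f_1);\ldots;\mathsf{create}(f_n);\mathsf{create}(m_1);\ldots;\mathsf{create}(m_{n'});\mathsf{create}(s_1);\ldots;\mathsf{create}(s_{k+2});\rho_1(u_1);\ldots;\rho_k(u_k);\mathsf{addfield}(s_{k+1},\mathsf{stop});\mathsf{addfield}(s_{k+2},\mathsf{stop});\mathsf{setspot}(s,s_1)$ (followed by termination), where for $u_j\in\{f.m,+f.m,-f.m\}$, $\rho_j(u_j)=\mathsf{addfield}(s_j,\mathsf{focus});\mathsf{addfield}(s_j,\mathsf{method});\mathsf{addfield}(s_j,\mathsf{pos});\mathsf{addfield}(s_j,\mathsf{neg});\mathsf{setfield}(s_j,\mathsf{focus},f);\mathsf{setfield}(s_j,\mathsf{method},m);\mathsf{setfield}(s_j,\mathsf{pos},s_p);\mathsf{setfield}(s_j,\mathsf{neg},s_q)$ with $(p,q)=(j+1,j+1)$ for $f.m$, $(j+1,j+2)$ for $+f.m$, $(j+2,j+1)$ for $-f.m$; $\rho_j(\#\#l)=\mathsf{addfield}(s_j,\mathsf{ajmp});\mathsf{setfield}(s_j,\mathsf{ajmp},s_l)$ if $1\le l\le k$, and $\rho_j(\#\#l)=\mathsf{addfield}(s_j,\mathsf{stop})$ otherwise. *)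

theory Defs
  imports Main
begin

text \<open>Instructions: basic f.m, positive test +f.m, negative test -f.m, absolute jump ##l.
  Foci and methods are spots (Foci, Meth are subsets of Spot).\<close>

datatype 's instr = Basic 's 's | PosT 's 's | NegT 's 's | AJmp nat

fun instr_foci :: "'s instr \<Rightarrow> 's list" where
  "instr_foci (Basic f m) = [f]"
| "instr_foci (PosT f m) = [f]"
| "instr_foci (NegT f m) = [f]"
| "instr_foci (AJmp l) = []"

fun instr_meths :: "'s instr \<Rightarrow> 's list" where
  "instr_meths (Basic f m) = [m]"
| "instr_meths (PosT f m) = [m]"
| "instr_meths (NegT f m) = [m]"
| "instr_meths (AJmp l) = []"

definition instr_ok :: "'s set \<Rightarrow> 's set \<Rightarrow> 's instr \<Rightarrow> bool" where
  "instr_ok Foci Meth i \<longleftrightarrow> set (instr_foci i) \<subseteq> Foci \<and> set (instr_meths i) \<subseteq> Meth"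

definition prog_foci :: "'s instr list \<Rightarrow> 's list" where
  "prog_foci P = remdups (concat (map instr_foci P))"

definition prog_meths :: "'s instr list \<Rightarrow> 's list" where
  "prog_meths P = remdups (concat (map instr_meths P))"

text \<open>Spots: type 's (finite), fields: type 'f (finite), proto-atoms: type 'p, with
  bottom represented by None. A state is (sigma, alpha).\<close>

type_synonym ('s, 'f, 'p) mdstate = "('s \<Rightarrow> 'p option) \<times> ('p \<rightharpoonup> ('f \<rightharpoonup> 'p option))"

datatype ('s, 'f) mdmeth =
    Create 's
  | SetSpot 's 's
  | Equal 's 's
  | AddField 's 'f
  | HasField 's 'f
  | SetField 's 'f 's
  | GetField 's 's 'f

definition t_init :: "('s, 'f, 'p) mdstate" where
  "t_init = ((\<lambda>_. None), Map.empty)"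

definition fields_of :: "('p \<rightharpoonup> ('f \<rightharpoonup> 'p option)) \<Rightarrow> 'p \<Rightarrow> ('f \<rightharpoonup> 'p option)" where
  "fields_of \<alpha> a = (case \<alpha> a of None \<Rightarrow> Map.empty | Some fl \<Rightarrow> fl)"

definition is_field :: "('s, 'f, 'p) mdstate \<Rightarrow> 's \<Rightarrow> 'f \<Rightarrow> bool" where
  "is_field t s v = (case fst t s of None \<Rightarrow> False | Some a \<Rightarrow> v \<in> dom (fields_of (snd t) a))"

text \<open>Effect function; proatom is the fixed bijection from positive naturals to proto-atoms.\<close>
fun eff :: "(nat \<Rightarrow> 'p) \<Rightarrow> ('s, 'f) mdmeth \<Rightarrow> ('s, 'f, 'p) mdstate \<Rightarrow> ('s, 'f, 'p) mdstate" where
  "eff proatom (Create s) (\<sigma>, \<alpha>) =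
     (let N = Max (insert 0 {n. 1 \<le> n \<and> proatom n \<in> dom \<alpha>}); a = proatom (Suc N)
      in (\<sigma>(s := Some a), \<alpha>(a \<mapsto> Map.empty)))"
| "eff proatom (SetSpot s s') (\<sigma>, \<alpha>) = (\<sigma>(s := \<sigma> s'), \<alpha>)"
| "eff proatom (Equal s s') (\<sigma>, \<alpha>) = (\<sigma>, \<alpha>)"
| "eff proatom (AddField s v) (\<sigma>, \<alpha>) =
     (case \<sigma> s of None \<Rightarrow> (\<sigma>, \<alpha>)
      | Some a \<Rightarrow> (if v \<in> dom (fields_of \<alpha> a) then (\<sigma>, \<alpha>)
                   else (\<sigma>, \<alpha>(a \<mapsto> (fields_of \<alpha> a)(v \<mapsto> None)))))"
| "eff proatom (HasField s v) (\<sigma>, \<alpha>) = (\<sigma>, \<alpha>)"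
| "eff proatom (SetField s v s') (\<sigma>, \<alpha>) =
     (case \<sigma> s of None \<Rightarrow> (\<sigma>, \<alpha>)
      | Some a \<Rightarrow> (if v \<in> dom (fields_of \<alpha> a)
                   then (\<sigma>, \<alpha>(a \<mapsto> (fields_of \<alpha> a)(v \<mapsto> \<sigma> s')))
                   else (\<sigma>, \<alpha>)))"
| "eff proatom (GetField s s' v) (\<sigma>, \<alpha>) =
     (case \<sigma> s' of None \<Rightarrow> (\<sigma>, \<alpha>)
      | Some a \<Rightarrow> (case fields_of \<alpha> a v of None \<Rightarrow> (\<sigma>, \<alpha>)
                   | Some c \<Rightarrow> (\<sigma>(s := c), \<alpha>)))"

fun yld :: "('s, 'f) mdmeth \<Rightarrow> ('s, 'f, 'p) mdstate \<Rightarrow> bool" where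
  "yld (Create s) t = True"
| "yld (SetSpot s s') t = True"
| "yld (Equal s s') t = (fst t s = fst t s')"
| "yld (AddField s v) t = (fst t s \<noteq> None \<and> \<not> is_field t s v)"
| "yld (HasField s v) t = is_field t s v"
| "yld (SetField s v s') t = is_field t s v"
| "yld (GetField s s' v) t = is_field t s' v"

definition run :: "(nat \<Rightarrow> 'p) \<Rightarrow> ('s, 'f) mdmeth list \<Rightarrow> ('s, 'f, 'p) mdstate \<Rightarrow> ('s, 'f, 'p) mdstate" where
  "run proatom ms t = fold (eff proatom) ms t"

text \<open>Parameters: sp j = s_j, the spot s, the number k of instructions, and the fields
  stop, ajmp, focus, method, pos, neg.\<close>

fun rho :: "(nat \<Rightarrow> 's) \<Rightarrow> nat \<Rightarrow> 'f \<Rightarrow> 'f \<Rightarrow> 'f \<Rightarrow> 'f \<Rightarrow> 'f \<Rightarrow> 'f \<Rightarrow> nat \<Rightarrow> 's instr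
            \<Rightarrow> ('s, 'f) mdmeth list" where
  "rho sp k fstop fajmp ffocus fmethod fpos fneg j (Basic f m) =
     [AddField (sp j) ffocus, AddField (sp j) fmethod, AddField (sp j) fpos, AddField (sp j) fneg,
      SetField (sp j) ffocus f, SetField (sp j) fmethod m,
      SetField (sp j) fpos (sp (j+1)), SetField (sp j) fneg (sp (j+1))]"
| "rho sp k fstop fajmp ffocus fmethod fpos fneg j (PosT f m) =
     [AddField (sp j) ffocus, AddField (sp j) fmethod, AddField (sp j) fpos, AddField (sp j) fneg,
      SetField (sp j) ffocus f, SetField (sp j) fmethod m,
      SetField (sp j) fpos (sp (j+1)), SetField (sp j) fneg (sp (j+2))]"
| "rho sp k fstop fajmp ffocus fmethod fpos fneg j (NegT f m) =
     [AddField (sp j) ffocus, AddField (sp j) fmethod, AddField (sp j) fpos, AddField (sp j) fneg,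
      SetField (sp j) ffocus f, SetField (sp j) fmethod m,
      SetField (sp j) fpos (sp (j+2)), SetField (sp j) fneg (sp (j+1))]"
| "rho sp k fstop fajmp ffocus fmethod fpos fneg j (AJmp l) =
     (if 1 \<le> l \<and> l \<le> k then [AddField (sp j) fajmp, SetField (sp j) fajmp (sp l)]
      else [AddField (sp j) fstop])"

definition pgldmd :: "(nat \<Rightarrow> 's) \<Rightarrow> 's \<Rightarrow> 'f \<Rightarrow> 'f \<Rightarrow> 'f \<Rightarrow> 'f \<Rightarrow> 'f \<Rightarrow> 'f \<Rightarrow> 's instr list
            \<Rightarrow> ('s, 'f) mdmeth list" where
  "pgldmd sp s fstop fajmp ffocus fmethod fpos fneg P =
     (let k = length P in
        map Create (prog_foci P) @ map Create (prog_meths P)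
      @ map (\<lambda>j. Create (sp j)) [1..<k+3]
      @ concat (map (\<lambda>j. rho sp k fstop fajmp ffocus fmethod fpos fneg j (P ! (j - 1))) [1..<k+1])
      @ [AddField (sp (k+1)) fstop, AddField (sp (k+2)) fstop, SetSpot s (sp 1)])"

end

theory Submission
  imports Defs
begin


lemma fold_create:
  assumes inj: "inj_on proatom {1..}"
  shows "fold (eff proatom) (map Create xs) (\<sigma>, \<alpha>) = (\<sigma>', \<alpha>') \<Longrightarrow> distinct xs \<Longrightarrow> finite (dom \<alpha>) \<Longrightarrow>
    (\<forall>x a. \<sigma> x = Some a \<longrightarrow> a \<in> dom \<alpha>) \<Longrightarrow>
    (\<forall>x. x \<notin> set xs \<longrightarrow> \<sigma>' x = \<sigma> x) \<and>
    (\<forall>x\<in>set xs. \<exists>a. \<sigma>' x = Some a \<and> a \<notin> dom \<alpha> \<and> \<alpha>' a = Some Map.empty) \<and>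
    (\<forall>x\<in>set xs. \<forall>y\<in>set xs. \<sigma>' x = \<sigma>' y \<longrightarrow> x = y) \<and>
    (\<forall>b\<in>dom \<alpha>. \<alpha>' b = \<alpha> b)"
proof (induction xs arbitrary: \<sigma> \<alpha>)
  case Nil thus ?case by simp
next
  case (Cons x xs)
  define N where "N = Max (insert 0 {n. 1 \<le> n \<and> proatom n \<in> dom \<alpha>})"
  define a where "a = proatom (Suc N)"
  have fin: "finite {n. 1 \<le> n \<and> proatom n \<in> dom \<alpha>}"
  proof -
    have "{n. 1 \<le> n \<and> proatom n \<in> dom \<alpha>} = proatom -` dom \<alpha> \<inter> {1..}" by auto
    thus ?thesis using finite_vimage_IntI[OF Cons.prems(3) inj] by simp
  qed
  have fresh: "a \<notin> dom \<alpha>"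
  proof
    assume "a \<in> dom \<alpha>"
    hence "Suc N \<in> insert 0 {n. 1 \<le> n \<and> proatom n \<in> dom \<alpha>}" by (simp add: a_def)
    hence "Suc N \<le> N" unfolding N_def using fin by (intro Max_ge) auto
    thus False by simp
  qed
  have step: "eff proatom (Create x) (\<sigma>, \<alpha>) = (\<sigma>(x := Some a), \<alpha>(a \<mapsto> Map.empty))"
    by (simp add: a_def N_def Let_def)
  have f1: "fold (eff proatom) (map Create xs) (\<sigma>(x := Some a), \<alpha>(a \<mapsto> Map.empty)) = (\<sigma>', \<alpha>')"
    using Cons.prems(1) step by simp
  have i2: "\<forall>y b. (\<sigma>(x := Some a)) y = Some b \<longrightarrow> b \<in> dom (\<alpha>(a \<mapsto> Map.empty))"
    using Cons.prems(4) by auto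
  have fd: "finite (dom (\<alpha>(a \<mapsto> Map.empty)))" using Cons.prems(3) by (simp only: dom_fun_upd) simp
  have IH: "(\<forall>y. y \<notin> set xs \<longrightarrow> \<sigma>' y = (\<sigma>(x := Some a)) y) \<and>
    (\<forall>y\<in>set xs. \<exists>b. \<sigma>' y = Some b \<and> b \<notin> dom (\<alpha>(a \<mapsto> Map.empty)) \<and> \<alpha>' b = Some Map.empty) \<and>
    (\<forall>y\<in>set xs. \<forall>z\<in>set xs. \<sigma>' y = \<sigma>' z \<longrightarrow> y = z) \<and>
    (\<forall>b\<in>dom (\<alpha>(a \<mapsto> Map.empty)). \<alpha>' b = (\<alpha>(a \<mapsto> Map.empty)) b)"
    by (rule Cons.IH[OF f1 _ fd i2]) (use Cons.prems(2) in simp)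
  have xn: "x \<notin> set xs" using Cons.prems(2) by simp
  have sx: "\<sigma>' x = Some a" using IH xn by simp
  have ax: "\<alpha>' a = Some Map.empty" using IH by simp
  show ?case
  proof (intro conjI)
    show "\<forall>y. y \<notin> set (x # xs) \<longrightarrow> \<sigma>' y = \<sigma> y" using IH by auto
    show "\<forall>y\<in>set (x # xs). \<exists>b. \<sigma>' y = Some b \<and> b \<notin> dom \<alpha> \<and> \<alpha>' b = Some Map.empty"
      using IH sx ax fresh by auto
    show "\<forall>y\<in>set (x # xs). \<forall>z\<in>set (x # xs). \<sigma>' y = \<sigma>' z \<longrightarrow> y = z"
    proof (intro ballI impI)
      have nz: "\<forall>z\<in>set xs. \<sigma>' z \<noteq> Some a" using IH by fastforce
      have inj': "\<forall>y\<in>set xs. \<forall>z\<in>set xs. \<sigma>' y = \<sigma>' z \<longrightarrow> y = z" using IH by blast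
      fix y z assume y: "y \<in> set (x # xs)" and z: "z \<in> set (x # xs)" and e: "\<sigma>' y = \<sigma>' z"
      show "y = z"
      proof (cases "y = x")
        case True
        show ?thesis
        proof (rule ccontr)
          assume "y \<noteq> z" hence "z \<in> set xs" using z True by auto
          thus False using nz e True sx by auto
        qed
      next
        case False
        hence yx: "y \<in> set xs" using y by auto
        show ?thesis
        proof (cases "z = x")
          case True thus ?thesis using nz e sx yx by auto
        next
          case False thus ?thesis using inj' yx z e by auto
        qed
      qed
    qed
    show "\<forall>b\<in>dom \<alpha>. \<alpha>' b = \<alpha> b" using IH fresh by auto
  qed
qed

fun blk :: "('s \<Rightarrow> 'p option) \<Rightarrow> (nat \<Rightarrow> 's) \<Rightarrow> nat \<Rightarrow> 'f \<Rightarrow> 'f \<Rightarrow> 'f \<Rightarrow> 'f \<Rightarrow> 'f \<Rightarrow> 'f \<Rightarrow> nat \<Rightarrow> 's instr \<Rightarrow> ('f \<rightharpoonup> 'p option)" where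
 "blk \<sigma> sp k fstop fajmp ffocus fmethod fpos fneg j (Basic f m) = [ffocus \<mapsto> \<sigma> f, fmethod \<mapsto> \<sigma> m, fpos \<mapsto> \<sigma> (sp (j+1)), fneg \<mapsto> \<sigma> (sp (j+1))]"
| "blk \<sigma> sp k fstop fajmp ffocus fmethod fpos fneg j (PosT f m) = [ffocus \<mapsto> \<sigma> f, fmethod \<mapsto> \<sigma> m, fpos \<mapsto> \<sigma> (sp (j+1)), fneg \<mapsto> \<sigma> (sp (j+2))]"
| "blk \<sigma> sp k fstop fajmp ffocus fmethod fpos fneg j (NegT f m) = [ffocus \<mapsto> \<sigma> f, fmethod \<mapsto> \<sigma> m, fpos \<mapsto> \<sigma> (sp (j+2)), fneg \<mapsto> \<sigma> (sp (j+1))]"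
| "blk \<sigma> sp k fstop fajmp ffocus fmethod fpos fneg j (AJmp l) = (if 1 \<le> l \<and> l \<le> k then [fajmp \<mapsto> \<sigma> (sp l)] else [fstop \<mapsto> None])"

lemma rho_fold:
  assumes "\<sigma> (sp j) = Some a" "\<alpha> a = Some Map.empty" "distinct [fstop, fajmp, ffocus, fmethod, fpos, fneg]"
  shows "fold (eff proatom) (rho sp k fstop fajmp ffocus fmethod fpos fneg j i) (\<sigma>, \<alpha>)
     = (\<sigma>, \<alpha>(a \<mapsto> blk \<sigma> sp k fstop fajmp ffocus fmethod fpos fneg j i))"
  using assms by (cases i) (auto simp: fields_of_def fun_upd_twist)


lemma fold_rhos:
  assumes dF: "distinct [fstop, fajmp, ffocus, fmethod, fpos, fneg]"
  shows "distinct js \<Longrightarrow> (\<forall>j\<in>set js. \<exists>a. \<sigma> (sp j) = Some a \<and> \<alpha> a = Some Map.empty) \<Longrightarrow>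
    (\<forall>i\<in>set js. \<forall>j\<in>set js. \<sigma> (sp i) = \<sigma> (sp j) \<longrightarrow> i = j) \<Longrightarrow>
    \<exists>\<alpha>'. fold (eff proatom) (concat (map (\<lambda>j. rho sp k fstop fajmp ffocus fmethod fpos fneg j (Q j)) js)) (\<sigma>, \<alpha>) = (\<sigma>, \<alpha>') \<and>
    (\<forall>j\<in>set js. \<alpha>' (the (\<sigma> (sp j))) = Some (blk \<sigma> sp k fstop fajmp ffocus fmethod fpos fneg j (Q j))) \<and>
    (\<forall>b. (\<forall>j\<in>set js. \<sigma> (sp j) \<noteq> Some b) \<longrightarrow> \<alpha>' b = \<alpha> b)"
proof (induction js arbitrary: \<alpha>)
  case Nil thus ?case by simp
next
  case (Cons j js)
  obtain a where a: "\<sigma> (sp j) = Some a" "\<alpha> a = Some Map.empty" using Cons.prems(2) by auto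
  define \<alpha>1 where "\<alpha>1 = \<alpha>(a \<mapsto> blk \<sigma> sp k fstop fajmp ffocus fmethod fpos fneg j (Q j))"
  have st: "fold (eff proatom) (rho sp k fstop fajmp ffocus fmethod fpos fneg j (Q j)) (\<sigma>, \<alpha>) = (\<sigma>, \<alpha>1)"
    unfolding \<alpha>1_def using a dF by (rule rho_fold)
  have p2: "\<forall>i\<in>set js. \<exists>b. \<sigma> (sp i) = Some b \<and> \<alpha>1 b = Some Map.empty"
  proof
    fix i assume i: "i \<in> set js"
    then obtain b where b: "\<sigma> (sp i) = Some b" "\<alpha> b = Some Map.empty" using Cons.prems(2) by auto
    have "i \<noteq> j" using i Cons.prems(1) by auto
    hence "b \<noteq> a" using Cons.prems(3) i a b by force
    thus "\<exists>b. \<sigma> (sp i) = Some b \<and> \<alpha>1 b = Some Map.empty" using b by (auto simp: \<alpha>1_def)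
  qed
  obtain \<alpha>' where IH: "fold (eff proatom) (concat (map (\<lambda>j. rho sp k fstop fajmp ffocus fmethod fpos fneg j (Q j)) js)) (\<sigma>, \<alpha>1) = (\<sigma>, \<alpha>')"
    "\<forall>j\<in>set js. \<alpha>' (the (\<sigma> (sp j))) = Some (blk \<sigma> sp k fstop fajmp ffocus fmethod fpos fneg j (Q j))"
    "\<forall>b. (\<forall>j\<in>set js. \<sigma> (sp j) \<noteq> Some b) \<longrightarrow> \<alpha>' b = \<alpha>1 b"
    using Cons.IH[OF _ p2] Cons.prems(1,3) by auto
  have na: "\<forall>i\<in>set js. \<sigma> (sp i) \<noteq> Some a" using Cons.prems(1,3) a by force
  show ?case
    apply (rule exI[of _ \<alpha>'])
    using IH st na a by (auto simp: \<alpha>1_def)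
qed



theorem proposition1:
  fixes P :: "('s::finite) instr list"
    and Foci Meth :: "'s set"
    and proatom :: "nat \<Rightarrow> 'p"
    and sp :: "nat \<Rightarrow> 's"
    and s u v :: 's
    and fstop fajmp ffocus fmethod fpos fneg :: "'f::finite"
  assumes "bij_betw proatom {1..} (UNIV :: 'p set)"
    and "Foci \<inter> Meth = {}"
    and "distinct [fstop, fajmp, ffocus, fmethod, fpos, fneg]"
    and "P \<noteq> []"
    and "\<forall>i\<in>set P. instr_ok Foci Meth i"
    and "inj_on sp {1..length P + 2}"
    and "distinct [s, u, v]"
    and "{s, u, v} \<inter> sp ` {1..length P + 2} = {}"
    and "({s, u, v} \<union> sp ` {1..length P + 2}) \<inter> (Foci \<union> Meth) = {}"
  defines "k \<equiv> length P"
    and "t \<equiv> run proatom (pgldmd sp s fstop fajmp ffocus fmethod fpos fneg P) t_init"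
  shows "yld (Equal s (sp 1)) t \<and>
    (\<forall>j\<in>{1..k}. \<forall>l\<in>{1..k}. \<forall>f\<in>Foci. \<forall>m\<in>Meth.
      (P ! (j - 1) = Basic f m \<longleftrightarrow>
         yld (GetField u (sp j) ffocus) t \<and>
         yld (Equal u f) (eff proatom (GetField u (sp j) ffocus) t) \<and>
         yld (GetField v (sp j) fmethod) t \<and>
         yld (Equal v m) (eff proatom (GetField v (sp j) fmethod) t) \<and>
         yld (GetField s (sp j) fpos) t \<and>
         yld (Equal s (sp (j+1))) (eff proatom (GetField s (sp j) fpos) t) \<and>
         yld (GetField s (sp j) fneg) t \<and>
         yld (Equal s (sp (j+1))) (eff proatom (GetField s (sp j) fneg) t)) \<and>
      (P ! (j - 1) = PosT f m \<longleftrightarrow>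
         yld (GetField u (sp j) ffocus) t \<and>
         yld (Equal u f) (eff proatom (GetField u (sp j) ffocus) t) \<and>
         yld (GetField v (sp j) fmethod) t \<and>
         yld (Equal v m) (eff proatom (GetField v (sp j) fmethod) t) \<and>
         yld (GetField s (sp j) fpos) t \<and>
         yld (Equal s (sp (j+1))) (eff proatom (GetField s (sp j) fpos) t) \<and>
         yld (GetField s (sp j) fneg) t \<and>
         yld (Equal s (sp (j+2))) (eff proatom (GetField s (sp j) fneg) t)) \<and>
      (P ! (j - 1) = NegT f m \<longleftrightarrow>
         yld (GetField u (sp j) ffocus) t \<and>
         yld (Equal u f) (eff proatom (GetField u (sp j) ffocus) t) \<and>
         yld (GetField v (sp j) fmethod) t \<and>
         yld (Equal v m) (eff proatom (GetField v (sp j) fmethod) t) \<and>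
         yld (GetField s (sp j) fpos) t \<and>
         yld (Equal s (sp (j+2))) (eff proatom (GetField s (sp j) fpos) t) \<and>
         yld (GetField s (sp j) fneg) t \<and>
         yld (Equal s (sp (j+1))) (eff proatom (GetField s (sp j) fneg) t)) \<and>
      (P ! (j - 1) = AJmp l \<longleftrightarrow>
         yld (GetField s (sp j) fajmp) t \<and>
         yld (Equal s (sp l)) (eff proatom (GetField s (sp j) fajmp) t)) \<and>
      ((\<exists>l'. l' \<notin> {1..k} \<and> P ! (j - 1) = AJmp l') \<longleftrightarrow> yld (HasField (sp j) fstop) t))"
proof -
  have injp: "inj_on proatom {1..}" using assms(1) bij_betw_imp_inj_on by blast
  have dF: "distinct [fstop, fajmp, ffocus, fmethod, fpos, fneg]" by (rule assms(3))
  define L where "L = prog_foci P @ prog_meths P @ map sp [1..<k+3]"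
  have fociF: "set (prog_foci P) \<subseteq> Foci" using assms(5) by (auto simp: prog_foci_def instr_ok_def)
  have methM: "set (prog_meths P) \<subseteq> Meth" using assms(5) by (auto simp: prog_meths_def instr_ok_def)
  have setu: "set [1..<k+3] = {1..k+2}" by auto
  have injsp: "inj_on sp {1..k+2}" using assms(6) by (simp add: k_def)
  have distL: "distinct L"
  proof -
    have d3: "distinct (map sp [1..<k+3])" using injsp setu by (simp add: distinct_map)
    have e1: "set (prog_foci P) \<inter> set (prog_meths P) = {}" using fociF methM assms(2) by blast
    have sps: "set (map sp [1..<k+3]) = sp ` {1..k+2}" using setu by simp
    have e2: "set (prog_foci P) \<inter> sp ` {1..k+2} = {}" using fociF assms(9) by (auto simp: k_def)
    have e3: "set (prog_meths P) \<inter> sp ` {1..k+2} = {}" using methM assms(9) by (auto simp: k_def)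
    show ?thesis unfolding L_def using d3 e1 e2 e3 sps
      by (simp add: prog_foci_def prog_meths_def) blast
  qed
  obtain \<sigma>c \<alpha>c where C: "fold (eff proatom) (map Create L) (t_init :: ('s,'f,'p) mdstate) = (\<sigma>c, \<alpha>c)" by (metis surj_pair)
  have CP: "(\<forall>x. x \<notin> set L \<longrightarrow> \<sigma>c x = None) \<and>
    (\<forall>x\<in>set L. \<exists>a. \<sigma>c x = Some a \<and> \<alpha>c a = Some Map.empty) \<and>
    (\<forall>x\<in>set L. \<forall>y\<in>set L. \<sigma>c x = \<sigma>c y \<longrightarrow> x = y)"
    using fold_create[OF injp C[unfolded t_init_def] distL] by auto
  have CP2: "\<forall>x\<in>set L. \<exists>a. \<sigma>c x = Some a \<and> \<alpha>c a = Some Map.empty" using CP by blast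
  have eqL: "\<And>x y. x \<in> set L \<Longrightarrow> (\<sigma>c x = \<sigma>c y) = (x = y)"
    using CP by (metis option.distinct(1))
  have spL: "\<And>i. 1 \<le> i \<Longrightarrow> i \<le> k + 2 \<Longrightarrow> sp i \<in> set L" by (auto simp: L_def)
  have spinj: "\<And>i i'. i \<in> {1..k+2} \<Longrightarrow> i' \<in> {1..k+2} \<Longrightarrow> (sp i = sp i') = (i = i')"
    using injsp by (meson inj_on_eq_iff)
  define Q where "Q = (\<lambda>j. P ! (j - 1))"
  have pre2: "\<forall>j\<in>set [1..<k+1]. \<exists>a. \<sigma>c (sp j) = Some a \<and> \<alpha>c a = Some Map.empty"
  proof
    fix j assume "j \<in> set [1..<k+1]"
    hence "1 \<le> j" "j \<le> k+2" by auto
    hence "sp j \<in> set L" by (rule spL)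
    thus "\<exists>a. \<sigma>c (sp j) = Some a \<and> \<alpha>c a = Some Map.empty" using CP2 by blast
  qed
  have pre3: "\<forall>i\<in>set [1..<k+1]. \<forall>j\<in>set [1..<k+1]. \<sigma>c (sp i) = \<sigma>c (sp j) \<longrightarrow> i = j"
  proof (intro ballI impI)
    fix i j assume i: "i \<in> set [1..<k+1]" and j: "j \<in> set [1..<k+1]" and e: "\<sigma>c (sp i) = \<sigma>c (sp j)"
    have ii: "1 \<le> i" "i \<le> k+2" using i by auto
    have jj: "1 \<le> j" "j \<le> k+2" using j by auto
    have "sp i \<in> set L" using ii by (rule spL)
    hence "sp i = sp j" using eqL e by blast
    thus "i = j" using spinj[of i j] ii jj by simp
  qed
  obtain \<alpha>' where R: "fold (eff proatom) (concat (map (\<lambda>j. rho sp k fstop fajmp ffocus fmethod fpos fneg j (Q j)) [1..<k+1])) (\<sigma>c, \<alpha>c) = (\<sigma>c, \<alpha>')"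
    and RB: "\<forall>j\<in>set [1..<k+1]. \<alpha>' (the (\<sigma>c (sp j))) = Some (blk \<sigma>c sp k fstop fajmp ffocus fmethod fpos fneg j (Q j))"
    using fold_rhos[where js="[1..<k+1]" and \<sigma>=\<sigma>c and sp=sp and \<alpha>=\<alpha>c and proatom=proatom and k=k and Q=Q, OF dF distinct_upt pre2 pre3] by blast
  have "sp (k+1) \<in> set L" "sp (k+2) \<in> set L" using spL by simp_all
  then obtain a1 a2 where a1: "\<sigma>c (sp (k+1)) = Some a1" and a2: "\<sigma>c (sp (k+2)) = Some a2" using CP2 by blast
  have pg: "pgldmd sp s fstop fajmp ffocus fmethod fpos fneg P = map Create L @ concat (map (\<lambda>j. rho sp k fstop fajmp ffocus fmethod fpos fneg j (Q j)) [1..<k+1]) @ [AddField (sp (k+1)) fstop, AddField (sp (k+2)) fstop, SetSpot s (sp 1)]"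
    by (simp add: pgldmd_def L_def Q_def k_def Let_def)
  have tt: "t = fold (eff proatom) [AddField (sp (k+1)) fstop, AddField (sp (k+2)) fstop, SetSpot s (sp 1)] (\<sigma>c, \<alpha>')"
    unfolding t_def run_def pg fold_append comp_apply C R ..
  obtain \<sigma>t \<alpha>t where tp: "t = (\<sigma>t, \<alpha>t)" by (metis surj_pair)
  have tS: "\<sigma>t = \<sigma>c(s := \<sigma>c (sp 1))" and tA: "\<And>b. b \<noteq> a1 \<Longrightarrow> b \<noteq> a2 \<Longrightarrow> \<alpha>t b = \<alpha>' b"
    using tt tp a1 a2 by (auto simp: fields_of_def split: if_splits)
  have spne: "\<And>i. i \<in> {1..k+2} \<Longrightarrow> sp i \<noteq> s \<and> sp i \<noteq> u \<and> sp i \<noteq> v" using assms(8) unfolding k_def by blast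
  have Fne: "\<And>f. f \<in> Foci \<Longrightarrow> f \<noteq> s \<and> f \<noteq> u \<and> f \<noteq> v" using assms(9) by blast
  have Mne: "\<And>f. f \<in> Meth \<Longrightarrow> f \<noteq> s \<and> f \<noteq> u \<and> f \<noteq> v" using assms(9) by blast
  have dFs: "ffocus \<noteq> fajmp" "fmethod \<noteq> fajmp" "fpos \<noteq> fajmp" "fneg \<noteq> fajmp"
    "ffocus \<noteq> fstop" "fmethod \<noteq> fstop" "fpos \<noteq> fstop" "fneg \<noteq> fstop" "fajmp \<noteq> fstop"
    using dF by auto
  have suv: "s \<noteq> u" "s \<noteq> v" "u \<noteq> v" using assms(7) by auto
  have first: "yld (Equal s (sp 1)) t" using tp tS spne[of 1] by auto
  show ?thesis
    apply (rule conjI)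
     apply (rule first)
    apply (intro ballI)
    subgoal for j l f m
    proof -
      assume j: "j \<in> {1..k}" and l: "l \<in> {1..k}" and f: "f \<in> Foci" and m: "m \<in> Meth"
      have jL: "sp j \<in> set L" using spL j by auto
      obtain aj where aj: "\<sigma>c (sp j) = Some aj" using CP2 jL by blast
      have "\<sigma>c (sp j) \<noteq> \<sigma>c (sp (k+1))" using eqL[OF jL, of "sp(k+1)"] spinj[of j "k+1"] j by simp
      hence "aj \<noteq> a1" using aj a1 by simp
      have "\<sigma>c (sp j) \<noteq> \<sigma>c (sp (k+2))" using eqL[OF jL, of "sp(k+2)"] spinj[of j "k+2"] j by simp
      hence "aj \<noteq> a2" using aj a2 by simp
      moreover note \<open>aj \<noteq> a1\<close>
      ultimately have fa: "fields_of \<alpha>t aj = blk \<sigma>c sp k fstop fajmp ffocus fmethod fpos fneg j (P ! (j - 1))"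
      proof -
        have jj: "j \<in> set [1..<k+1]" using j by auto
        have "\<alpha>' aj = Some (blk \<sigma>c sp k fstop fajmp ffocus fmethod fpos fneg j (P ! (j - 1)))"
          using bspec[OF RB jj] aj by (simp add: Q_def)
        moreover have "\<alpha>t aj = \<alpha>' aj" using tA \<open>aj \<noteq> a1\<close> \<open>aj \<noteq> a2\<close> by blast
        ultimately show ?thesis by (simp add: fields_of_def)
      qed
      have sj: "\<sigma>t (sp j) = Some aj" using tS aj spne[of j] j by auto
      have inP: "P ! (j - 1) \<in> set P" using j by (auto simp: k_def)
      have pf: "\<And>x. x \<in> set P \<Longrightarrow> set (instr_foci x) \<subseteq> set (prog_foci P)" by (auto simp: prog_foci_def)
      have pm: "\<And>x. x \<in> set P \<Longrightarrow> set (instr_meths x) \<subseteq> set (prog_meths P)" by (auto simp: prog_meths_def)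
      have j1: "sp (j+1) \<in> set L" "sp (j+2) \<in> set L" using spL j by auto
      have j12: "sp (j+1) \<noteq> sp (j+2)" using spinj[of "j+1" "j+2"] j by auto
      have sj1: "sp (j+1) \<noteq> s" "sp (j+2) \<noteq> s" "sp l \<noteq> s" using spne j l by auto
      have fs: "\<sigma>t f = \<sigma>c f" "\<sigma>t m = \<sigma>c m" using tS Fne[OF f] Mne[OF m] by auto
      have spt: "\<sigma>t (sp (j+1)) = \<sigma>c (sp (j+1))" "\<sigma>t (sp (j+2)) = \<sigma>c (sp (j+2))" "\<sigma>t (sp l) = \<sigma>c (sp l)"
        using tS sj1 by auto
      note eqs = eqL[OF j1(1)] eqL[OF j1(2)]
      show ?thesis
      proof (cases "P ! (j - 1)")
        case (Basic f' m')
        have L': "f' \<in> set L" "m' \<in> set L" using pf[OF inP] pm[OF inP] Basic by (auto simp: L_def)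
        show ?thesis using Basic fa sj dF Fne[OF f] Mne[OF m] suv eqL[OF L'(1)] eqL[OF L'(2)] eqs j12 fs spt sj1
          by (simp add: tp is_field_def)
      next
        case (PosT f' m')
        have L': "f' \<in> set L" "m' \<in> set L" using pf[OF inP] pm[OF inP] PosT by (auto simp: L_def)
        show ?thesis using PosT fa sj dF Fne[OF f] Mne[OF m] suv eqL[OF L'(1)] eqL[OF L'(2)] eqs j12 fs spt sj1
          by (simp add: tp is_field_def)
      next
        case (NegT f' m')
        have L': "f' \<in> set L" "m' \<in> set L" using pf[OF inP] pm[OF inP] NegT by (auto simp: L_def)
        show ?thesis using NegT fa sj dF Fne[OF f] Mne[OF m] suv eqL[OF L'(1)] eqL[OF L'(2)] eqs j12 fs spt sj1
          by (simp add: tp is_field_def)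
      next
        case (AJmp l')
        show ?thesis
        proof (cases "l' \<in> {1..k}")
          case True
          have "(\<sigma>c (sp l') = \<sigma>c (sp l)) = (l' = l)" using eqL[OF spL[of l']] spinj[of l' l] True l by auto
          then show ?thesis using AJmp True fa sj dF dFs Fne[OF f] Mne[OF m] suv fs spt sj1
            by (simp add: tp is_field_def)
        next
          case False
          have "l' \<noteq> l" using False l by auto
          then show ?thesis using AJmp l False fa sj dF dFs Fne[OF f] Mne[OF m] suv fs spt sj1
            by (simp add: tp is_field_def)
        qed
      qed
    qed
    done
qed

end
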